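(* Let $\mathcal{B}=(T,\bowtie)$ be a block of homogeneous transactions, let $k$ be the chromatic number of the conflict graph $(T,\bowtie)$, let $c_{\min}:T\to\{1,\dots,k\}$ be a proper vertex coloring with $k$ colors, $T_i=\{tx: c_{\min}(tx)=i\}$, and $\mathcal S_{c_{\min}}=\mathrm{LevelSchedule}(T_1,\dots,T_k)$. Then $\mathrm{Lt}_{\mathbb 1}(\mathcal S_{c_{\min}})=\mathrm{MinLt}_{\mathbb 1}(\mathcal{B})$, i.e., $\mathcal S_{c_{\min}}$ has minimum latency among all valid schedules of $\mathcal{B}$.
   Context: A block consists of a finite set $T$ of transactions with a symmetric irreflexive conflict relation $\bowtie$; the conflict graph is $(T,\bowtie)$. Homogeneous: all transaction lengths are taken to be $1$. A schedule is a set $\mathcal S\subseteq T\times T$ with $(T,\mathcal S)$ acyclic; it is valid if for every pair $tx\bowtie tx'$ there is a directed path in $(T,\mathcal S)$ from $tx$ to $tx'$ or from $tx'$ to $tx$. $\mathrm{Lt}_{\mathbb 1}(\mathcal S)$ is the maximum number of vertices on a directed path in $(T,\mathcal S)$, and $\mathrm{MinLt}_{\mathbb 1}(\mathcal{B})$ is the minimum of $\mathrm{Lt}_{\mathbb 1}(\mathcal S)$ over all valid schedules $\mathcal S$. $\mathrm{LevelSchedule}(B_1,\dots,B_k)$ for an ordered partition of $T$ into conflict-free sets: set $B_0=\emptyset$, $\mathcal S=\emptyset$; for $i=1,\dots,k$ and, for each $i$, for $j=i-1,\dots,0$ (decreasing): let $E=\{(u,v)\in B_j\times B_i: u\bowtie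 v\}$, let $P$ be the set of pairs $(x,y)$ with a directed path from $x$ to $y$ in the current $(T,\mathcal S)$, and set $\mathcal S\leftarrow\mathcal S\cup(E\setminus P)$; output $\mathcal S$. *)

theory Defs
  imports Main
begin

text \<open>A block: a finite set T of transactions with a symmetric irreflexive
conflict relation conf (the conflict graph is (T, conf)).
Schedules are edge sets S \<subseteq> T \<times> T with (T,S) acyclic.\<close>

definition is_schedule :: "'a set \<Rightarrow> ('a \<times> 'a) set \<Rightarrow> bool" where
  "is_schedule T S \<longleftrightarrow> S \<subseteq> T \<times> T \<and> acyclic S"

definition valid_schedule :: "'a set \<Rightarrow> ('a \<Rightarrow> 'a \<Rightarrow> bool) \<Rightarrow> ('a \<times> 'a) set \<Rightarrow> bool" where
  "valid_schedule T conf S \<longleftrightarrow> is_schedule T S \<and>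
     (\<forall>x\<in>T. \<forall>y\<in>T. conf x y \<longrightarrow> (x, y) \<in> S\<^sup>+ \<or> (y, x) \<in> S\<^sup>+)"

definition is_dpath :: "'a set \<Rightarrow> ('a \<times> 'a) set \<Rightarrow> 'a list \<Rightarrow> bool" where
  "is_dpath T S p \<longleftrightarrow> p \<noteq> [] \<and> set p \<subseteq> T \<and>
     (\<forall>i. Suc i < length p \<longrightarrow> (p ! i, p ! Suc i) \<in> S)"

definition Lt1 :: "'a set \<Rightarrow> ('a \<times> 'a) set \<Rightarrow> nat" where
  "Lt1 T S = Max (insert 0 {length p | p. is_dpath T S p})"

definition MinLt1 :: "'a set \<Rightarrow> ('a \<Rightarrow> 'a \<Rightarrow> bool) \<Rightarrow> nat" where
  "MinLt1 T conf = Min {Lt1 T S | S. valid_schedule T conf S}"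

definition proper_coloring :: "'a set \<Rightarrow> ('a \<Rightarrow> 'a \<Rightarrow> bool) \<Rightarrow> nat \<Rightarrow> ('a \<Rightarrow> nat) \<Rightarrow> bool" where
  "proper_coloring T conf k c \<longleftrightarrow> (\<forall>x\<in>T. c x \<in> {1..k}) \<and>
     (\<forall>x\<in>T. \<forall>y\<in>T. conf x y \<longrightarrow> c x \<noteq> c y)"

definition chromatic_number :: "'a set \<Rightarrow> ('a \<Rightarrow> 'a \<Rightarrow> bool) \<Rightarrow> nat" where
  "chromatic_number T conf = (LEAST k. \<exists>c. proper_coloring T conf k c)"

text \<open>LevelSchedule(B_1,...,B_k): Bs = [B_1,...,B_k], B_0 = {}.\<close>
definition level_B :: "'a set list \<Rightarrow> nat \<Rightarrow> 'a set" where
  "level_B Bs j = (if j = 0 then {} else Bs ! (j - 1))"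

definition level_step :: "('a \<Rightarrow> 'a \<Rightarrow> bool) \<Rightarrow> 'a set \<Rightarrow> 'a set \<Rightarrow> ('a \<times> 'a) set \<Rightarrow> ('a \<times> 'a) set" where
  "level_step conf Bj Bi S = S \<union> ({(u, v). u \<in> Bj \<and> v \<in> Bi \<and> conf u v} - S\<^sup>+)"

definition level_inner :: "('a \<Rightarrow> 'a \<Rightarrow> bool) \<Rightarrow> 'a set list \<Rightarrow> nat \<Rightarrow> ('a \<times> 'a) set \<Rightarrow> ('a \<times> 'a) set" where
  "level_inner conf Bs i S =
     fold (\<lambda>j S. level_step conf (level_B Bs j) (level_B Bs i) S) (rev [0..<i]) S"

definition level_schedule :: "('a \<Rightarrow> 'a \<Rightarrow> bool) \<Rightarrow> 'a set list \<Rightarrow> ('a \<times> 'a) set" where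
  "level_schedule conf Bs = fold (\<lambda>i S. level_inner conf Bs i S) [1..<Suc (length Bs)] {}"

end

theory Submission
  imports Defs
begin

lemma fold_pres:
  assumes "\<forall>x\<in>set xs. \<forall>S. P S \<longrightarrow> P (f x S)" "P S"
  shows "P (fold f xs S)"
  using assms by (induct xs arbitrary: S) auto

lemma fold_mono_sub:
  assumes "\<forall>x\<in>set xs. \<forall>S. S \<subseteq> f x S"
  shows "S \<subseteq> fold f xs S"
  using assms
proof (induct xs arbitrary: S)
  case Nil then show ?case by simp
next
  case (Cons a xs)
  have "S \<subseteq> f a S" using Cons(2) by simp
  also have "f a S \<subseteq> fold f xs (f a S)" using Cons by simp
  finally show ?case by simp
qed

lemma fold_reach:
  assumes "\<forall>x\<in>set xs. \<forall>S. S \<subseteq> f x S" "a \<in> set xs" "\<forall>S. P (f a S)"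
    "\<forall>S S'. P S \<and> S \<subseteq> S' \<longrightarrow> P S'"
  shows "P (fold f xs S)"
  using assms
proof (induct xs arbitrary: S)
  case Nil then show ?case by simp
next
  case (Cons y ys)
  show ?case
  proof (cases "a \<in> set ys")
    case True then show ?thesis using Cons by simp
  next
    case False
    then have "a = y" using Cons by simp
    have "f y S \<subseteq> fold f ys (f y S)" using Cons(2) by (intro fold_mono_sub) simp
    then show ?thesis using Cons(4,5) \<open>a = y\<close> by simp blast
  qed
qed

lemma step_mono: "S \<subseteq> level_step conf A B S"
  unfolding level_step_def by blast

lemma inner_mono: "S \<subseteq> level_inner conf Bs i S"
  unfolding level_inner_def by (rule fold_mono_sub) (simp add: step_mono)

lemma dpath_trancl:
  assumes "is_dpath T S p" "i < j" "j < length p"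
  shows "(p ! i, p ! j) \<in> S\<^sup>+"
  using assms(2,3)
proof (induct j)
  case 0 then show ?case by simp
next
  case (Suc j)
  have e: "(p ! j, p ! Suc j) \<in> S" using assms(1) Suc.prems unfolding is_dpath_def by blast
  show ?case
  proof (cases "i = j")
    case True then show ?thesis using e by auto
  next
    case False
    then have "(p ! i, p ! j) \<in> S\<^sup>+" using Suc by simp
    then show ?thesis using e by (meson trancl.trancl_into_trancl)
  qed
qed

lemma dpath_len:
  assumes "finite T" "is_schedule T S" "is_dpath T S p"
  shows "length p \<le> card T"
proof -
  have "distinct p"
  proof (subst distinct_conv_nth, intro allI impI)
    fix i j assume ij: "i < length p" "j < length p" "i \<noteq> j"
    show "p ! i \<noteq> p ! j"
    proof
      assume eq: "p ! i = p ! j"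
      have "(p ! min i j, p ! max i j) \<in> S\<^sup>+"
        using ij by (intro dpath_trancl[OF assms(3)]) auto
      moreover have "p ! min i j = p ! max i j" using eq by (simp add: min_def max_def)
      ultimately show False using assms(2) unfolding is_schedule_def acyclic_def by metis
    qed
  qed
  then have "length p = card (set p)" by (simp add: distinct_card)
  also have "\<dots> \<le> card T" using assms(1,3) unfolding is_dpath_def by (simp add: card_mono)
  finally show ?thesis .
qed

lemma lower_bound:
  assumes fin: "finite T" and v: "valid_schedule T conf S"
  shows "chromatic_number T conf \<le> Lt1 T S"
proof -
  have sch: "is_schedule T S" using v unfolding valid_schedule_def by simp
  have ST: "S \<subseteq> T \<times> T" using sch unfolding is_schedule_def by simp
  define A where "A = {length p | p. is_dpath T S p}"
  have finA: "finite A"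
    unfolding A_def
    by (rule finite_subset[of _ "{..card T}"]) (auto dest: dpath_len[OF fin sch])
  define col where "col x = Max {length p | p. is_dpath T S p \<and> last p = x}" for x
  have finx: "finite {length p | p. is_dpath T S p \<and> last p = x}" for x
    by (rule finite_subset[OF _ finA]) (auto simp: A_def)
  have single: "x \<in> T \<Longrightarrow> is_dpath T S [x]" for x unfolding is_dpath_def by simp
  have col_ge: "is_dpath T S p \<Longrightarrow> length p \<le> col (last p)" for p
    unfolding col_def by (rule Max_ge[OF finx]) blast
  have col_1: "x \<in> T \<Longrightarrow> 1 \<le> col x" for x using col_ge[OF single[of x]] by simp
  have col_le: "x \<in> T \<Longrightarrow> col x \<le> Lt1 T S" for x
  proof -
    assume "x \<in> T"
    have ne: "{length p | p. is_dpath T S p \<and> last p = x} \<noteq> {}" using single[OF \<open>x \<in> T\<close>] by force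
    have "col x \<in> {length p | p. is_dpath T S p \<and> last p = x}"
      unfolding col_def by (rule Max_in[OF finx ne])
    then obtain p where "is_dpath T S p" "col x = length p" by blast
    then show ?thesis unfolding Lt1_def using finA A_def
      by (metis (mono_tags, lifting) Max_ge finite_insert insertCI mem_Collect_eq)
  qed
  have edge: "(x, y) \<in> S \<Longrightarrow> col x < col y" for x y
  proof -
    assume xy: "(x, y) \<in> S"
    then have xT: "x \<in> T" and yT: "y \<in> T" using ST by auto
    have ne: "{length p | p. is_dpath T S p \<and> last p = x} \<noteq> {}" using single[OF xT] by force
    have "col x \<in> {length p | p. is_dpath T S p \<and> last p = x}"
      unfolding col_def by (rule Max_in[OF finx ne])
    then obtain p where p: "is_dpath T S p" "last p = x" "col x = length p" by blast
    have "is_dpath T S (p @ [y])"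
      using p xy yT unfolding is_dpath_def
      apply (auto simp: nth_append)
      apply (metis Suc_lessI last_conv_nth less_Suc_eq_0_disj diff_Suc_1 length_greater_0_conv)
      done
    from col_ge[OF this] p show ?thesis by simp
  qed
  have tr: "(x, y) \<in> S\<^sup>+ \<Longrightarrow> col x < col y" for x y
    by (induct rule: trancl_induct) (auto dest: edge)
  have "proper_coloring T conf (Lt1 T S) col"
    unfolding proper_coloring_def
  proof (intro conjI ballI impI)
    fix x assume "x \<in> T" then show "col x \<in> {1..Lt1 T S}" using col_1 col_le by auto
  next
    fix x y assume "x \<in> T" "y \<in> T" "conf x y"
    then have "(x, y) \<in> S\<^sup>+ \<or> (y, x) \<in> S\<^sup>+" using v unfolding valid_schedule_def by blast
    then show "col x \<noteq> col y" using tr by (metis less_irrefl)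
  qed
  then have "Ex (proper_coloring T conf (Lt1 T S))" by blast
  then show ?thesis unfolding chromatic_number_def by (rule Least_le)
qed


lemma path_incr:
  assumes "is_dpath T S p" "S \<subseteq> {(u, v). c u < (c v :: nat)}" "\<forall>x\<in>T. c x \<in> {1..k}"
  shows "length p \<le> k"
proof -
  have a: "i < length p \<Longrightarrow> Suc i \<le> c (p ! i)" for i
  proof (induct i)
    case 0
    then have "p ! 0 \<in> T" using assms(1) unfolding is_dpath_def by (meson nth_mem subsetD)
    then show ?case using assms(3) by auto
  next
    case (Suc i)
    then have "(p ! i, p ! Suc i) \<in> S" using assms(1) unfolding is_dpath_def by blast
    then have "c (p ! i) < c (p ! Suc i)" using assms(2) by blast
    then show ?case using Suc by simp
  qed
  show ?thesis
  proof (cases p)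
    case Nil then show ?thesis using assms(1) unfolding is_dpath_def by simp
  next
    case (Cons a list)
    then have l: "length p - 1 < length p" by simp
    then have "p ! (length p - 1) \<in> T" using assms(1) unfolding is_dpath_def by (meson nth_mem subsetD)
    then have "c (p ! (length p - 1)) \<le> k" using assms(3) by auto
    with a[OF l] show ?thesis using Cons by simp
  qed
qed

theorem theorem4:
  fixes T :: "'a set" and conf :: "'a \<Rightarrow> 'a \<Rightarrow> bool" and c :: "'a \<Rightarrow> nat" and k :: nat
  assumes fin: "finite T"
    and sym: "\<forall>x\<in>T. \<forall>y\<in>T. conf x y \<longrightarrow> conf y x"
    and irr: "\<forall>x\<in>T. \<not> conf x x"
    and k_def: "k = chromatic_number T conf"
    and col: "proper_coloring T conf k c"
  shows "Lt1 T (level_schedule conf (map (\<lambda>i. {tx \<in> T. c tx = i}) [1..<Suc k]))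
           = MinLt1 T conf"
proof -
  define Bs where "Bs = map (\<lambda>i. {tx \<in> T. c tx = i}) [1..<Suc k]"
  define L where "L = level_schedule conf Bs"
  define R where "R = {(u, v). u \<in> T \<and> v \<in> T \<and> c u < c v}"
  have cr: "\<forall>x\<in>T. c x \<in> {1..k}" using col unfolding proper_coloring_def by blast
  have cc: "\<forall>x\<in>T. \<forall>y\<in>T. conf x y \<longrightarrow> c x \<noteq> c y" using col unfolding proper_coloring_def by blast
  have lenB: "length Bs = k" by (simp add: Bs_def)
  have lB2: "1 \<le> j \<Longrightarrow> j \<le> k \<Longrightarrow> level_B Bs j = {tx \<in> T. c tx = j}" for j
    unfolding level_B_def Bs_def by (auto simp del: upt_Suc)
  have lB: "j \<le> k \<Longrightarrow> level_B Bs j \<subseteq> {tx \<in> T. c tx = j}" for j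
    using lB2[of j] by (cases "j = 0") (auto simp: level_B_def)
  have LR: "L \<subseteq> R"
    unfolding L_def level_schedule_def
  proof (rule fold_pres[where P="\<lambda>S. S \<subseteq> R"], intro ballI allI impI)
    fix i S assume i: "i \<in> set [1..<Suc (length Bs)]" and S: "S \<subseteq> R"
    then have ik: "i \<le> k" by (auto simp: lenB)
    show "level_inner conf Bs i S \<subseteq> R"
      unfolding level_inner_def
    proof (rule fold_pres[where P="\<lambda>S. S \<subseteq> R"], intro ballI allI impI)
      fix j S' assume j: "j \<in> set (rev [0..<i])" and S': "S' \<subseteq> R"
      have "level_B Bs j \<subseteq> {tx \<in> T. c tx = j}" "level_B Bs i \<subseteq> {tx \<in> T. c tx = i}"
        using lB j ik by auto
      moreover have "j < i" using j by simp
      ultimately show "level_step conf (level_B Bs j) (level_B Bs i) S' \<subseteq> R"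
        using S' unfolding level_step_def R_def by auto
    qed (rule S)
  qed simp
  have transR: "trans R" unfolding R_def trans_def by auto
  have LR2: "L\<^sup>+ \<subseteq> R" using trancl_mono[OF _ LR] trancl_id[OF transR] by auto
  have sch: "is_schedule T L"
    unfolding is_schedule_def acyclic_def using LR LR2 by (auto simp: R_def)
  have reach: "(x, y) \<in> L\<^sup>+" if xy: "x \<in> T" "y \<in> T" "conf x y" "c x < c y" for x y
  proof -
    have xk: "1 \<le> c x" "c x \<le> k" "1 \<le> c y" "c y \<le> k" using cr xy by auto
    have inner: "(x, y) \<in> (level_inner conf Bs (c y) S)\<^sup>+" for S
      unfolding level_inner_def
    proof (rule fold_reach[where a="c x"])
      show "\<forall>j\<in>set (rev [0..<c y]). \<forall>S. S \<subseteq> level_step conf (level_B Bs j) (level_B Bs (c y)) S"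
        using step_mono by blast
      show "c x \<in> set (rev [0..<c y])" using xy by simp
      show "\<forall>S. (x, y) \<in> (level_step conf (level_B Bs (c x)) (level_B Bs (c y)) S)\<^sup>+"
      proof
        fix S
        have "x \<in> level_B Bs (c x)" "y \<in> level_B Bs (c y)" using lB2 xk xy by auto
        then have "(x, y) \<in> S\<^sup>+ \<or> (x, y) \<in> level_step conf (level_B Bs (c x)) (level_B Bs (c y)) S"
          using xy unfolding level_step_def by auto
        then show "(x, y) \<in> (level_step conf (level_B Bs (c x)) (level_B Bs (c y)) S)\<^sup>+"
          using trancl_mono[OF _ step_mono] by blast
      qed
      show "\<forall>S S'. (x, y) \<in> S\<^sup>+ \<and> S \<subseteq> S' \<longrightarrow> (x, y) \<in> S'\<^sup>+"
        using trancl_mono by blast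
    qed
    show ?thesis
      unfolding L_def level_schedule_def
    proof (rule fold_reach[where a="c y"])
      show "\<forall>i\<in>set [1..<Suc (length Bs)]. \<forall>S. S \<subseteq> level_inner conf Bs i S"
        using inner_mono by blast
      show "c y \<in> set [1..<Suc (length Bs)]" using xk by (auto simp: lenB)
      show "\<forall>S. (x, y) \<in> (level_inner conf Bs (c y) S)\<^sup>+" using inner by blast
      show "\<forall>S S'. (x, y) \<in> S\<^sup>+ \<and> S \<subseteq> S' \<longrightarrow> (x, y) \<in> S'\<^sup>+"
        using trancl_mono by blast
    qed
  qed
  have valid: "valid_schedule T conf L"
    unfolding valid_schedule_def
  proof (intro conjI sch ballI impI)
    fix x y assume xy: "x \<in> T" "y \<in> T" "conf x y"
    then have "c x \<noteq> c y" using cc by blast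
    then show "(x, y) \<in> L\<^sup>+ \<or> (y, x) \<in> L\<^sup>+"
      using reach xy sym by (metis linorder_neqE_nat)
  qed
  have upper: "Lt1 T L \<le> k"
  proof -
    have LR': "L \<subseteq> {(u, v). c u < c v}" using LR by (auto simp: R_def)
    have bnd: "\<forall>n \<in> {length p | p. is_dpath T L p}. n \<le> k"
      using path_incr[OF _ LR' cr] by blast
    then have "finite {length p | p. is_dpath T L p}"
      by (meson finite_nat_set_iff_bounded_le)
    then show ?thesis unfolding Lt1_def using bnd by (simp add: Max_le_iff)
  qed
  have lower: "\<forall>S. valid_schedule T conf S \<longrightarrow> k \<le> Lt1 T S"
    using lower_bound[OF fin] k_def by blast
  define M where "M = {Lt1 T S | S. valid_schedule T conf S}"
  have finM: "finite M"
  proof -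
    have "M \<subseteq> (Lt1 T) ` Pow (T \<times> T)"
      unfolding M_def valid_schedule_def is_schedule_def by auto
    then show ?thesis using fin by (meson finite_SigmaI finite_Pow_iff finite_imageI finite_subset)
  qed
  have inM: "Lt1 T L \<in> M" using valid unfolding M_def by blast
  have "MinLt1 T conf = Min M" unfolding MinLt1_def M_def by simp
  moreover have "Min M \<le> Lt1 T L" using finM inM by simp
  moreover have "k \<le> Min M"
    using finM inM lower unfolding M_def by (subst Min_ge_iff) auto
  ultimately show ?thesis using upper unfolding L_def Bs_def by simp
qed

end
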